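(* Let $\Lambda$ and $\Lambda'$ be two transversal Lagrangian linear subspaces of $\mathbb{C}^n$ and let $f:[a,b]\times[0,1]\to\mathbb{C}^n$ be a holomorphic strip (in the variable $s+it$) such that $f([a,b]\times\{0\})\subset\Lambda$, $f([a,b]\times\{1\})\subset\Lambda'$, with $b-a>2$. Then there are constants $C$ and $\delta>0$, depending only on the relative position of $\Lambda$ and $\Lambda'$, such that for all $(s,t)\in[a,b]\times[0,1]$, $$\|f(s+it)\|\leq C\,\|f\|_{\infty,\,([a,a+2]\times[0,1])\cup([b-2,b]\times[0,1])}\;e^{-\delta\min(s-a,\,b-s)}.$$
   Context: $\|f\|_{\infty,A}$ denotes the supremum of $\|f\|$ over the set $A$; $\mathbb{C}^n$ carries its standard symplectic and complex structure. *)

theory Defs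
  imports "HOL-Complex_Analysis.Complex_Analysis"
begin

text \<open>Standard symplectic form on C^n: omega(u,v) = Im (sum_i conj(u_i) v_i),
  i.e. the form sum_i dx_i /\ dy_i.\<close>
definition std_omega :: "complex ^ 'n \<Rightarrow> complex ^ 'n \<Rightarrow> real" where
  "std_omega u v = (\<Sum>i\<in>UNIV. Im (cnj (u $ i) * v $ i))"

definition lagrangian_subspace :: "(complex ^ 'n) set \<Rightarrow> bool" where
  "lagrangian_subspace L \<longleftrightarrow> subspace L \<and> dim L = CARD('n) \<and>
     (\<forall>u\<in>L. \<forall>v\<in>L. std_omega u v = 0)"

definition transversal :: "(complex ^ 'n) set \<Rightarrow> (complex ^ 'n) set \<Rightarrow> bool" where
  "transversal L L' \<longleftrightarrow> L \<inter> L' = {0}"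

definition rect :: "real \<Rightarrow> real \<Rightarrow> real \<Rightarrow> real \<Rightarrow> complex set" where
  "rect a b c d = {z. a \<le> Re z \<and> Re z \<le> b \<and> c \<le> Im z \<and> Im z \<le> d}"

definition open_rect :: "real \<Rightarrow> real \<Rightarrow> real \<Rightarrow> real \<Rightarrow> complex set" where
  "open_rect a b c d = {z. a < Re z \<and> Re z < b \<and> c < Im z \<and> Im z < d}"

definition holomorphic_strip :: "real \<Rightarrow> real \<Rightarrow> (complex \<Rightarrow> complex ^ 'n) \<Rightarrow> bool" where
  "holomorphic_strip a b f \<longleftrightarrow> continuous_on (rect a b 0 1) f \<and>
     (\<forall>i. (\<lambda>z. f z $ i) holomorphic_on open_rect a b 0 1)"

definition sup_norm_on :: "(complex \<Rightarrow> 'a::real_normed_vector) \<Rightarrow> complex set \<Rightarrow> real" where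
  "sup_norm_on f A = (SUP z\<in>A. norm (f z))"

end

theory Submission
  imports Defs
begin


definition kern :: "real \<Rightarrow> complex \<Rightarrow> complex" where
  "kern th w = of_real pi * exp (- of_real th * w) / (1 - exp (- of_real pi * w))"

lemma kern_cnj: "cnj (kern th w) = kern th (cnj w)"
  by (simp add: kern_def exp_cnj)

lemma exp_pi_shift: "exp (- of_real pi * (w - 2 * \<i>)) = exp (- of_real pi * w)"
proof -
  have "- of_real pi * (w - 2 * \<i>) = - of_real pi * w + 2 * pi * \<i>"
    by (simp add: algebra_simps)
  then have "exp (- of_real pi * (w - 2 * \<i>)) = exp (- of_real pi * w + 2 * pi * \<i>)" by simp
  also have "\<dots> = exp (- of_real pi * w) * exp (2 * pi * \<i>)" by (rule exp_add)
  finally show ?thesis by simp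
qed

lemma kern_shift: "kern th (w - 2 * \<i>) = cis (2 * th) * kern th w"
proof -
  have "- of_real th * (w - 2 * \<i>) = - of_real th * w + \<i> * of_real (2*th)"
    by (simp add: algebra_simps)
  then have "exp (- of_real th * (w - 2 * \<i>)) = exp (- of_real th * w + \<i> * of_real (2*th))"
    by simp
  also have "\<dots> = exp (- of_real th * w) * cis (2*th)"
    by (simp only: exp_add cis_conv_exp)
  finally have "exp (- of_real th * (w - 2 * \<i>)) = exp (- of_real th * w) * cis (2*th)" .
  then show ?thesis unfolding kern_def exp_pi_shift by simp
qed

lemma exp_neg_pi_ne1:
  assumes "\<bar>Im w\<bar> < 2" "w \<noteq> 0"
  shows "exp (- of_real pi * w) \<noteq> 1"
proof
  assume "exp (- of_real pi * w) = 1"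
  then obtain n :: int where r: "Re (- of_real pi * w) = 0" and i: "Im (- of_real pi * w) = of_int (2*n) * pi"
    by (auto simp: exp_eq_1)
  from r have "Re w = 0" by simp
  from i have "- Im w * pi = of_int (2*n) * pi" by (simp add: mult.commute)
  then have "- Im w = of_int (2*n)" using mult.commute pi_gt_zero by (metis mult_cancel_right pi_neq_zero mult.commute)
  with assms(1) have "\<bar>of_int (2*n) :: real\<bar> < 2" by simp
  then have "n = 0" by linarith
  with \<open>- Im w = of_int (2*n)\<close> \<open>Re w = 0\<close> have "w = 0" by (simp add: complex_eq_iff)
  with assms show False by simp
qed

lemma exp_neg_pi_ne1': 
  assumes "0 < Im w" "Im w < 2"
  shows "exp (- of_real pi * w) \<noteq> 1"
proof -
  have "w \<noteq> 0" using assms by auto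
  moreover have "\<bar>Im w\<bar> < 2" using assms by auto
  ultimately show ?thesis by (rule exp_neg_pi_ne1[rotated])
qed

lemma norm_exp_neg: "norm (exp (- of_real c * w)) = exp (- c * Re w)"
  by simp

lemma kern_bound_pos:
  assumes "1 \<le> Re w"
  shows "norm (kern th w) \<le> pi * exp (- th * Re w) / (1 - exp (- pi))"
proof -
  have e: "exp (- pi * Re w) \<le> exp (- pi)" using assms by simp
  have "1 - exp (- pi) \<le> 1 - norm (exp (- of_real pi * w))" using e by simp
  also have "\<dots> \<le> norm (1 - exp (- of_real pi * w))"
    by (metis norm_one norm_triangle_ineq2)
  finally have d: "1 - exp (- pi) \<le> norm (1 - exp (- of_real pi * w))" .
  have p: "0 < 1 - exp (- pi)" by simp
  have np: "0 < norm (1 - exp (- of_real pi * w))" using d p by linarith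
  have "norm (kern th w) = pi * exp (- th * Re w) / norm (1 - exp (- of_real pi * w))"
    by (simp add: kern_def norm_divide norm_mult)
  also have "\<dots> \<le> pi * exp (- th * Re w) / (1 - exp (- pi))"
    using d p np by (intro divide_left_mono) (auto intro!: mult_pos_pos simp del: exp_minus)
  finally show ?thesis .
qed

lemma kern_bound_neg:
  assumes "Re w \<le> -1"
  shows "norm (kern th w) \<le> pi * exp ((pi - th) * Re w) / (1 - exp (- pi))"
proof -
  let ?E = "exp (- of_real pi * w)"
  have nE: "norm ?E = exp (- pi * Re w)" by simp
  have "pi * Re w \<le> pi * (-1)" using assms by (intro mult_left_mono) auto
  then have e: "exp (pi * Re w) \<le> exp (- pi)" by simp
  have "norm ?E - 1 \<le> norm (1 - ?E)"
    by (metis norm_minus_commute norm_one norm_triangle_ineq2)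
  have pos: "0 < exp (-pi * Re w)" by simp
  have d: "norm (1 - ?E) \<ge> exp (- pi * Re w) * (1 - exp (- pi))"
  proof -
    have "exp (- pi * Re w) * (1 - exp (- pi)) \<le> exp (- pi * Re w) * (1 - exp (pi * Re w))"
      using e pos by (intro mult_left_mono) auto
    also have "\<dots> = exp (- pi * Re w) - 1"
      by (simp add: algebra_simps flip: exp_add)
    finally show ?thesis using \<open>norm ?E - 1 \<le> norm (1 - ?E)\<close> nE by linarith
  qed
  have p: "0 < 1 - exp (- pi)" by simp
  have np: "0 < norm (1 - ?E)" using d p pos by (smt (verit) mult_pos_pos)
  have "norm (kern th w) = pi * exp (- th * Re w) / norm (1 - ?E)"
    by (simp add: kern_def norm_divide norm_mult)
  also have "\<dots> \<le> pi * exp (- th * Re w) / (exp (- pi * Re w) * (1 - exp (- pi)))"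
    using d p pos np by (intro divide_left_mono) (auto intro!: mult_pos_pos simp del: exp_minus)
  also have "\<dots> = pi * exp ((pi - th) * Re w) / (1 - exp (- pi))"
  proof -
    have "(pi - th) * Re w = (- th * Re w) - (- pi * Re w)" by algebra
    then have "exp ((pi - th) * Re w) = exp (- th * Re w) / exp (- pi * Re w)"
      by (simp only: exp_diff)
    then show ?thesis using p pos by (simp add: field_simps)
  qed
  finally show ?thesis .
qed

lemma kern_lim: "((\<lambda>w. w * kern th w) \<longlongrightarrow> 1) (at 0)"
proof -
  have d: "((\<lambda>w::complex. 1 - exp (- of_real pi * w)) has_field_derivative of_real pi) (at 0)"
    by (auto intro!: derivative_eq_intros)
  have "((\<lambda>w::complex. ((1 - exp (- of_real pi * w)) - (1 - exp (- of_real pi * 0))) / (w - 0)) \<longlongrightarrow> of_real pi) (at 0)"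
    using d unfolding has_field_derivative_iff .
  then have l1: "((\<lambda>w::complex. (1 - exp (- of_real pi * w)) / w) \<longlongrightarrow> of_real pi) (at 0)" by simp
  have l2: "((\<lambda>w::complex. of_real pi * exp (- of_real th * w)) \<longlongrightarrow> of_real pi * exp (- of_real th * 0)) (at 0)"
    by (intro tendsto_intros)
  have "((\<lambda>w. (of_real pi * exp (- of_real th * w)) / ((1 - exp (- of_real pi * w)) / w)) \<longlongrightarrow> (of_real pi * 1) / of_real pi) (at (0::complex))"
    using tendsto_divide[OF l2 l1] by simp
  then have l3: "((\<lambda>w. (of_real pi * exp (- of_real th * w)) / ((1 - exp (- of_real pi * w)) / w)) \<longlongrightarrow> 1) (at (0::complex))"
    by simp
  show ?thesis
  proof (rule Lim_transform_within[OF l3 zero_less_one])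
    fix w :: complex assume "0 < dist w 0" "dist w 0 < 1"
    then show "of_real pi * exp (- of_real th * w) / ((1 - exp (- of_real pi * w)) / w) = w * kern th w"
      by (simp add: kern_def field_simps)
  qed
qed


lemma rectpath_integral_split:
  fixes F :: "complex \<Rightarrow> complex" and a1 a3 :: complex
  defines "a2 \<equiv> Complex (Re a3) (Im a1)" and "a4 \<equiv> Complex (Re a1) (Im a3)"
  assumes cont: "continuous_on (path_image (rectpath a1 a3)) F"
    and I: "(F has_contour_integral I) (rectpath a1 a3)"
  shows "I = contour_integral (linepath a1 a2) F + contour_integral (linepath a2 a3) F
           + contour_integral (linepath a3 a4) F + contour_integral (linepath a4 a1) F"
proof -
  have r: "rectpath a1 a3 = linepath a1 a2 +++ linepath a2 a3 +++ linepath a3 a4 +++ linepath a4 a1"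
    by (simp add: rectpath_def a2_def a4_def Let_def)
  have pim: "path_image (rectpath a1 a3) = closed_segment a1 a2 \<union> closed_segment a2 a3 \<union> closed_segment a3 a4 \<union> closed_segment a4 a1"
    unfolding r by (simp add: path_image_join Un_assoc)
  have h: "\<And>p q. closed_segment p q \<subseteq> path_image (rectpath a1 a3) \<Longrightarrow>
      (F has_contour_integral contour_integral (linepath p q) F) (linepath p q)"
    by (rule has_contour_integral_integral, rule contour_integrable_continuous_linepath,
        rule continuous_on_subset[OF cont])
  have "(F has_contour_integral (contour_integral (linepath a1 a2) F + (contour_integral (linepath a2 a3) F
           + (contour_integral (linepath a3 a4) F + contour_integral (linepath a4 a1) F)))) (rectpath a1 a3)"
    unfolding r
    by (intro has_contour_integral_join h valid_path_join) (auto simp: pim)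
  from has_contour_integral_unique[OF I this] show ?thesis by (simp add: add.assoc)
qed

lemma contour_integral_cnj_horiz:
  assumes "Im A = Im B" and F2: "F2 contour_integrable_on linepath A B"
    and eq: "\<And>z. z \<in> closed_segment A B \<Longrightarrow> F1 z = cnj (F2 z)"
  shows "contour_integral (linepath A B) F1 = cnj (contour_integral (linepath A B) F2)"
proof -
  obtain I2 where "(F2 has_contour_integral I2) (linepath A B)"
    using F2 by (auto simp: contour_integrable_on_def)
  then have "((\<lambda>x. F2 (linepath A B x) * (B - A)) has_integral I2) {0..1}"
    by (simp add: has_contour_integral_linepath)
  then have "((cnj \<circ> (\<lambda>x. F2 (linepath A B x) * (B - A))) has_integral cnj I2) {0..1}"
    by (simp only: has_integral_cnj)
  then have "((\<lambda>x. F1 (linepath A B x) * (B - A)) has_integral cnj I2) {0..1}"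
  proof (rule has_integral_eq[rotated])
    fix x :: real assume "x \<in> {0..1}"
    then have "linepath A B x \<in> closed_segment A B" by (rule linepath_in_path)
    moreover have "cnj (B - A) = B - A" using assms(1) by (simp add: complex_eq_iff)
    ultimately show "(cnj \<circ> (\<lambda>x. F2 (linepath A B x) * (B - A))) x = F1 (linepath A B x) * (B - A)"
      using eq by simp
  qed
  then have "(F1 has_contour_integral cnj I2) (linepath A B)"
    by (simp add: has_contour_integral_linepath)
  then show ?thesis using \<open>(F2 has_contour_integral I2) (linepath A B)\<close>
    by (simp add: contour_integral_unique)
qed


lemma aux_div: "(p::real) \<noteq> 0 \<Longrightarrow> d \<noteq> 0 \<Longrightarrow> (M*(p*X/d) + M*(p*Y/d))/p = M*(X+Y)/d"
  by (simp add: field_simps)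

lemma vert_bound:
  assumes "(F has_contour_integral I) (linepath A B)" "Re A = Re B" "\<bar>Im B - Im A\<bar> = 1"
    "0 \<le> Bd" "\<And>z. z \<in> closed_segment A B \<Longrightarrow> norm (F z) \<le> Bd"
  shows "norm I \<le> Bd"
proof -
  have "norm (B - A) = 1" using assms(2,3) by (simp add: cmod_def)
  with has_contour_integral_bound_linepath[OF assms(1,4,5)] show ?thesis by simp
qed

lemma kern_cont:
  assumes "\<And>w. w \<in> T \<Longrightarrow> exp (- of_real pi * (w - c)) \<noteq> 1"
  shows "continuous_on T (\<lambda>w. kern th (w - c))"
  unfolding kern_def using assms by (intro continuous_intros) auto

lemma kern_hol:
  assumes "\<And>w. w \<in> T \<Longrightarrow> exp (- of_real pi * (w - c)) \<noteq> 1"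
  shows "(\<lambda>w. kern th (w - c)) holomorphic_on T"
  unfolding kern_def using assms by (intro holomorphic_intros) auto

lemma core:
  fixes g :: "complex \<Rightarrow> complex"
  assumes cont: "continuous_on (cbox (Complex a1 0) (Complex b1 1)) g"
    and hol: "g holomorphic_on box (Complex a1 0) (Complex b1 1)"
    and bot: "\<And>\<zeta>. \<zeta> \<in> cbox (Complex a1 0) (Complex b1 1) \<Longrightarrow> Im \<zeta> = 0 \<Longrightarrow> Im (g \<zeta>) = 0"
    and top: "\<And>\<zeta>. \<zeta> \<in> cbox (Complex a1 0) (Complex b1 1) \<Longrightarrow> Im \<zeta> = 1 \<Longrightarrow> Im (cnj (cis th) * g \<zeta>) = 0"
    and side: "\<And>\<zeta>. \<zeta> \<in> cbox (Complex a1 0) (Complex b1 1) \<Longrightarrow> Re \<zeta> = a1 \<or> Re \<zeta> = b1 \<Longrightarrow> norm (g \<zeta>) \<le> M"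
    and s: "a1 + 1 \<le> s" "s \<le> b1 - 1" and t: "0 < t" "t < 1"
  shows "norm (g (Complex s t)) \<le> M * (exp (- th * (b1 - s)) + exp (- (pi - th) * (s - a1))) / (1 - exp (- pi))"
proof -
  define S where "S = cbox (Complex a1 0) (Complex b1 1)"
  define z where "z = Complex s t"
  define R where "R = rectpath (Complex a1 0) (Complex b1 1)"
  have zbox: "z \<in> box (Complex a1 0) (Complex b1 1)" using s t by (simp add: z_def in_box_complex_iff)
  have intS: "interior S = box (Complex a1 0) (Complex b1 1)" by (simp add: S_def)
  have pimR: "path_image R = S - box (Complex a1 0) (Complex b1 1)"
    unfolding R_def S_def using s by (intro path_image_rectpath_cbox_minus_box) auto
  have S_Im: "\<And>w. w \<in> S \<Longrightarrow> 0 \<le> Im w \<and> Im w \<le> 1 \<and> a1 \<le> Re w \<and> Re w \<le> b1"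
    by (auto simp: S_def in_cbox_complex_iff)
  have M0: "0 \<le> M" using side[of "Complex a1 0"] s by (auto simp: in_cbox_complex_iff) (meson norm_ge_zero order_trans)
  define U where "U = {w::complex. t - 2 < Im w \<and> Im w < t + 2}"
  have openU: "open U" unfolding U_def
    by (intro open_Collect_conj open_Collect_less continuous_intros)
  have SU: "S \<subseteq> U"
  proof
    fix x assume "x \<in> S" then show "x \<in> U" using S_Im[of x] t by (auto simp: U_def)
  qed
  have zU: "z \<in> U" by (simp add: U_def z_def)
  have den1: "exp (- of_real pi * (w - z)) \<noteq> 1" if "w \<in> U" "w \<noteq> z" for w
    using that by (intro exp_neg_pi_ne1) (auto simp: U_def z_def)
  have den2: "exp (- of_real pi * (w - cnj z)) \<noteq> 1" if "w \<in> S" for w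
    using that S_Im[OF that] t by (intro exp_neg_pi_ne1') (auto simp: z_def)
  define f2 where "f2 = (\<lambda>w. (w - z) * kern th (w - z))"
  have hf2: "f2 holomorphic_on U - {z}"
    unfolding f2_def by (intro holomorphic_intros kern_hol) (use den1 in auto)
  have lim1: "(f2 \<longlongrightarrow> 1) (at z)"
  proof -
    have "((\<lambda>h. f2 (z + h)) \<longlongrightarrow> 1) (at 0)"
      using kern_lim[of th] by (simp add: f2_def)
    then show ?thesis by (simp add: LIM_offset_zero_iff)
  qed
  have lim0: "((\<lambda>w. (w - z) * f2 w) \<longlongrightarrow> 0) (at z)"
  proof -
    have "((\<lambda>w. (w - z) * f2 w) \<longlongrightarrow> (z - z) * 1) (at z)"
      by (intro tendsto_intros lim1)
    then show ?thesis by simp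
  qed
  obtain h where hh: "h holomorphic_on U" and hf: "\<And>w. w \<in> U - {z} \<Longrightarrow> h w = f2 w"
  proof -
    have "z \<in> interior U" using openU zU by (simp add: interior_open)
    from holomorphic_on_extend_lim[OF hf2 this] lim0 show ?thesis using that by blast
  qed
  have hz: "h z = 1"
  proof -
    have "isCont h z" using hh openU zU
      by (meson holomorphic_on_imp_continuous_on continuous_on_eq_continuous_at)
    then have "(h \<longlongrightarrow> h z) (at z)" by (simp add: isCont_def)
    moreover have "eventually (\<lambda>w. f2 w = h w) (at z)"
      using eventually_at_topological openU zU hf by (metis (mono_tags, lifting) DiffI singletonD)
    ultimately have "(f2 \<longlongrightarrow> h z) (at z)" using tendsto_cong by (metis (mono_tags, lifting))
    with lim1 show ?thesis using tendsto_unique by (metis trivial_limit_at)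
  qed
  define G where "G = (\<lambda>w. g w * h w)"
  have contG: "continuous_on S G" unfolding G_def S_def
    using cont hh SU S_def holomorphic_on_imp_continuous_on continuous_on_subset
    by (intro continuous_on_mult) blast+
  have dG: "G field_differentiable at x" if "x \<in> interior S - {}" for x
  proof -
    have x: "x \<in> box (Complex a1 0) (Complex b1 1)" using that intS by simp
    have "g field_differentiable at x"
      using hol x by (meson holomorphic_on_imp_differentiable_at open_box)
    moreover have "h field_differentiable at x"
    proof -
      have "x \<in> U" using x SU intS interior_subset by blast
      then show ?thesis using hh openU by (meson holomorphic_on_imp_differentiable_at)
    qed
    ultimately show ?thesis unfolding G_def by (intro field_differentiable_mult)
  qed
  have pathS: "path_image R \<subseteq> S - {z}" using pimR zbox by auto
  have CF: "((\<lambda>w. G w / (w - z)) has_contour_integral (2 * pi * \<i> * winding_number R z * G z)) R"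
    by (rule Cauchy_integral_formula_weak[of S "{}"])
       (use contG dG zbox intS pathS in \<open>auto simp: S_def R_def\<close>)
  have wR: "winding_number R z = 1" unfolding R_def by (rule winding_number_rectpath[OF zbox])
  define F1 where "F1 = (\<lambda>w. g w * kern th (w - z))"
  define F2 where "F2 = (\<lambda>w. g w * kern th (w - cnj z))"
  have I1: "(F1 has_contour_integral (2 * pi * \<i> * g z)) R"
  proof (rule has_contour_integral_eq)
    show "((\<lambda>w. G w / (w - z)) has_contour_integral (2 * pi * \<i> * g z)) R"
      using CF wR hz by (simp add: G_def)
  next
    fix w assume w: "w \<in> path_image R"
    then have "w \<in> U - {z}" using pathS SU by auto
    then have "h w = (w - z) * kern th (w - z)" using hf f2_def by simp
    moreover have "w \<noteq> z" using \<open>w \<in> U - {z}\<close> by simp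
    ultimately show "G w / (w - z) = F1 w" by (simp add: G_def F1_def)
  qed
  have contF2: "continuous_on S F2" unfolding F2_def
    using cont den2 by (intro continuous_on_mult kern_cont) (auto simp: S_def)
  have I2: "(F2 has_contour_integral 0) R"
  proof (rule Cauchy_theorem_convex[of S F2 "{}"])
    fix x assume "x \<in> interior S - {}"
    then have x: "x \<in> box (Complex a1 0) (Complex b1 1)" using intS by simp
    have "g field_differentiable at x"
      using hol x by (meson holomorphic_on_imp_differentiable_at open_box)
    moreover have "(\<lambda>w. kern th (w - cnj z)) field_differentiable at x"
    proof -
      have "(\<lambda>w. kern th (w - cnj z)) holomorphic_on box (Complex a1 0) (Complex b1 1)"
        using den2 intS interior_subset[of S] by (intro kern_hol) auto
      then show ?thesis using x by (meson holomorphic_on_imp_differentiable_at open_box)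
    qed
    ultimately show "F2 field_differentiable at x" unfolding F2_def by (intro field_differentiable_mult)
  qed (use contF2 pathS in \<open>auto simp: S_def R_def\<close>)
  have contF1: "continuous_on (path_image R) F1" unfolding F1_def
  proof (intro continuous_on_mult kern_cont)
    show "continuous_on (path_image R) g" using cont pathS by (auto simp: S_def intro: continuous_on_subset)
    fix w assume "w \<in> path_image R"
    then show "exp (- of_real pi * (w - z)) \<noteq> 1" using den1 pathS SU by auto
  qed
  have contF2': "continuous_on (path_image R) F2" using contF2 pathS continuous_on_subset by blast
  note sp1 = rectpath_integral_split[OF contF1[unfolded R_def] I1[unfolded R_def]]
  note sp2 = rectpath_integral_split[OF contF2'[unfolded R_def] I2[unfolded R_def]]
  have S_iff: "\<And>w. w \<in> S \<longleftrightarrow> a1 \<le> Re w \<and> Re w \<le> b1 \<and> 0 \<le> Im w \<and> Im w \<le> 1"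
    by (auto simp: S_def in_cbox_complex_iff)
  have ab: "a1 \<le> b1" using s by simp
  have seg1: "\<And>w. w \<in> closed_segment (Complex a1 0) (Complex b1 0) \<Longrightarrow> Im w = 0 \<and> w \<in> S"
    using ab by (auto simp: closed_segment_same_Im closed_segment_eq_real_ivl S_iff split: if_splits)
  have seg2: "\<And>w. w \<in> closed_segment (Complex b1 0) (Complex b1 1) \<Longrightarrow> Re w = b1 \<and> w \<in> S"
    using ab by (auto simp: closed_segment_same_Re closed_segment_eq_real_ivl S_iff split: if_splits)
  have seg3: "\<And>w. w \<in> closed_segment (Complex b1 1) (Complex a1 1) \<Longrightarrow> Im w = 1 \<and> w \<in> S"
    using ab by (auto simp: closed_segment_same_Im closed_segment_eq_real_ivl S_iff split: if_splits)
  have seg4: "\<And>w. w \<in> closed_segment (Complex a1 1) (Complex a1 0) \<Longrightarrow> Re w = a1 \<and> w \<in> S"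
    using ab by (auto simp: closed_segment_same_Re closed_segment_eq_real_ivl S_iff split: if_splits)
  have onR: "w \<in> path_image R" if "w \<in> S" "Im w = 0 \<or> Im w = 1 \<or> Re w = a1 \<or> Re w = b1" for w
    using that pimR by (auto simp: in_box_complex_iff)
  have int1: "(F1 has_contour_integral contour_integral (linepath A B) F1) (linepath A B)"
    if "closed_segment A B \<subseteq> path_image R" for A B
    by (rule has_contour_integral_integral, rule contour_integrable_continuous_linepath,
        rule continuous_on_subset[OF contF1 that])
  have int2: "(F2 has_contour_integral contour_integral (linepath A B) F2) (linepath A B)"
    if "closed_segment A B \<subseteq> S" for A B
    by (rule has_contour_integral_integral, rule contour_integrable_continuous_linepath,
        rule continuous_on_subset[OF contF2 that])
  define E1 where "E1 = contour_integral (linepath (Complex a1 0) (Complex b1 0)) F1"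
  define E2 where "E2 = contour_integral (linepath (Complex b1 0) (Complex b1 1)) F1"
  define E3 where "E3 = contour_integral (linepath (Complex b1 1) (Complex a1 1)) F1"
  define E4 where "E4 = contour_integral (linepath (Complex a1 1) (Complex a1 0)) F1"
  define D1 where "D1 = contour_integral (linepath (Complex a1 0) (Complex b1 0)) F2"
  define D2 where "D2 = contour_integral (linepath (Complex b1 0) (Complex b1 1)) F2"
  define D3 where "D3 = contour_integral (linepath (Complex b1 1) (Complex a1 1)) F2"
  define D4 where "D4 = contour_integral (linepath (Complex a1 1) (Complex a1 0)) F2"
  have e1: "2 * pi * \<i> * g z = E1 + E2 + E3 + E4"
    using sp1 by (simp add: E1_def E2_def E3_def E4_def)
  have e2: "0 = D1 + D2 + D3 + D4"
    using sp2 by (simp add: D1_def D2_def D3_def D4_def)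
  have ED1: "E1 = cnj D1" unfolding E1_def D1_def
  proof (rule contour_integral_cnj_horiz)
    show "F2 contour_integrable_on linepath (Complex a1 0) (Complex b1 0)"
      using int2 seg1 by (meson has_contour_integral_integrable subsetI)
    fix w assume "w \<in> closed_segment (Complex a1 0) (Complex b1 0)"
    then have w: "Im w = 0" "w \<in> S" using seg1 by auto
    have gr: "cnj (g w) = g w" using bot[of w] w by (simp add: S_def complex_eq_iff)
    have wr: "cnj w = w" using w by (simp add: complex_eq_iff)
    have "cnj (F2 w) = cnj (g w) * kern th (cnj (w - cnj z))"
      by (simp add: F2_def kern_cnj)
    also have "\<dots> = F1 w" using gr wr by (simp add: F1_def)
    finally show "F1 w = cnj (F2 w)" by simp
  qed simp
  have ED3: "E3 = cnj D3" unfolding E3_def D3_def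
  proof (rule contour_integral_cnj_horiz)
    show "F2 contour_integrable_on linepath (Complex b1 1) (Complex a1 1)"
      using int2 seg3 by (meson has_contour_integral_integrable subsetI)
    fix w assume "w \<in> closed_segment (Complex b1 1) (Complex a1 1)"
    then have w: "Im w = 1" "w \<in> S" using seg3 by auto
    define r where "r = cnj (cis th) * g w"
    have rr: "cnj r = r" using top[of w] w by (simp add: S_def r_def complex_eq_iff)
    have gw: "g w = cis th * r" unfolding r_def
      by (simp add: cis_cnj mult.assoc[symmetric] cis_mult)
    have "cnj w - z = (w - z) - 2 * \<i>" using w by (simp add: complex_eq_iff)
    then have cw: "kern th (cnj w - z) = cis (2 * th) * kern th (w - z)"
      using kern_shift[of th "w - z"] by (simp only:)
    have "cnj (F2 w) = cnj (g w) * kern th (cnj (w - cnj z))"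
      by (simp add: F2_def kern_cnj)
    also have "\<dots> = cis (- th) * r * (cis (2 * th) * kern th (w - z))"
      using rr by (simp add: gw cw cis_cnj)
    also have "\<dots> = (cis (- th) * cis (2 * th)) * r * kern th (w - z)" by (simp add: algebra_simps)
    also have "\<dots> = cis th * r * kern th (w - z)" by (simp add: cis_mult)
    also have "\<dots> = F1 w" by (simp add: F1_def gw)
    finally show "F1 w = cnj (F2 w)" by simp
  qed simp
  define Br where "Br = M * (pi * exp (- th * (b1 - s)) / (1 - exp (- pi)))"
  define Bl where "Bl = M * (pi * exp ((pi - th) * (a1 - s)) / (1 - exp (- pi)))"
  have Br0: "0 \<le> Br" using M0 by (simp add: Br_def)
  have Bl0: "0 \<le> Bl" using M0 by (simp add: Bl_def)
  have bndr: "norm (g w * kern th (w - c)) \<le> Br" if "Re w = b1" "w \<in> S" "Re c = s" for w c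
  proof -
    have "norm (g w) \<le> M" using side[of w] that by (simp add: S_def)
    moreover have "norm (kern th (w - c)) \<le> pi * exp (- th * (b1 - s)) / (1 - exp (- pi))"
      using kern_bound_pos[of "w - c" th] that s by simp
    ultimately show ?thesis unfolding Br_def norm_mult using M0
      by (intro mult_mono) auto
  qed
  have bndl: "norm (g w * kern th (w - c)) \<le> Bl" if "Re w = a1" "w \<in> S" "Re c = s" for w c
  proof -
    have "norm (g w) \<le> M" using side[of w] that by (simp add: S_def)
    moreover have "norm (kern th (w - c)) \<le> pi * exp ((pi - th) * (a1 - s)) / (1 - exp (- pi))"
      using kern_bound_neg[of "w - c" th] that s by simp
    ultimately show ?thesis unfolding Bl_def norm_mult using M0
      by (intro mult_mono) auto
  qed
  have nE2: "norm E2 \<le> Br" unfolding E2_def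
    by (rule vert_bound[OF int1 _ _ Br0]) (use seg2 onR bndr in \<open>auto simp: F1_def z_def\<close>)
  have nD2: "norm D2 \<le> Br" unfolding D2_def
    by (rule vert_bound[OF int2 _ _ Br0]) (use seg2 bndr in \<open>auto simp: F2_def z_def\<close>)
  have nE4: "norm E4 \<le> Bl" unfolding E4_def
    by (rule vert_bound[OF int1 _ _ Bl0]) (use seg4 onR bndl in \<open>auto simp: F1_def z_def\<close>)
  have nD4: "norm D4 \<le> Bl" unfolding D4_def
    by (rule vert_bound[OF int2 _ _ Bl0]) (use seg4 bndl in \<open>auto simp: F2_def z_def\<close>)
  have "2 * pi * \<i> * g z = (E2 - cnj D2) + (E4 - cnj D4)"
  proof -
    have "cnj D1 + cnj D2 + cnj D3 + cnj D4 = 0" using arg_cong[OF e2, of cnj] by simp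
    then show ?thesis using e1 ED1 ED3 by (simp add: algebra_simps)
  qed
  then have "norm (2 * pi * \<i> * g z) \<le> norm (E2 - cnj D2) + norm (E4 - cnj D4)"
    by (simp only: norm_triangle_ineq)
  also have "\<dots> \<le> (norm E2 + norm D2) + (norm E4 + norm D4)"
    using norm_triangle_ineq4[of E2 "cnj D2"] norm_triangle_ineq4[of E4 "cnj D4"]
    by (simp only: complex_mod_cnj)
  also have "\<dots> \<le> 2 * Br + 2 * Bl" using nE2 nD2 nE4 nD4 by simp
  finally have "2 * pi * norm (g z) \<le> 2 * Br + 2 * Bl"
    by (simp add: norm_mult)
  then have "norm (g z) \<le> (Br + Bl) / pi" by (simp add: field_simps)
  also have "\<dots> = M * (exp (- th * (b1 - s)) + exp (- (pi - th) * (s - a1))) / (1 - exp (- pi))"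
  proof -
    have "(pi - th) * (a1 - s) = - (pi - th) * (s - a1)" by algebra
    then have blq: "Bl = M * (pi * exp (- (pi - th) * (s - a1)) / (1 - exp (- pi)))"
      by (simp only: Bl_def)
    show ?thesis unfolding Br_def blq by (rule aux_div) auto
  qed
  finally show ?thesis by (simp add: z_def)
qed


lemma rect_cbox: "rect a b c d = cbox (Complex a c) (Complex b d)"
  by (auto simp: rect_def in_cbox_complex_iff)

lemma open_rect_box: "open_rect a b c d = box (Complex a c) (Complex b d)"
  by (auto simp: open_rect_def in_box_complex_iff)

lemma Complex_cont: "continuous_on A (\<lambda>t::real. Complex s t)"
  unfolding Complex_eq by (intro continuous_intros)

definition C0 :: real where "C0 = 2 * exp (2 * pi) / (1 - exp (- pi))"

lemma C0_ge: "1 \<le> C0 * exp (- pi)"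
proof -
  have p: "0 < 1 - exp (- pi)" "1 - exp (- pi) \<le> 1" by auto
  have "C0 * exp (- pi) = 2 * exp pi / (1 - exp (- pi))"
    by (simp add: C0_def mult_exp_exp)
  also have "\<dots> \<ge> 2 * exp pi" using p by (simp add: field_simps)
  moreover have "2 * exp pi \<ge> 1"
  proof -
    have "1 \<le> exp pi" using pi_gt_zero by simp
    then show ?thesis by linarith
  qed
  ultimately show ?thesis by linarith
qed

lemma scalar:
  fixes g :: "complex \<Rightarrow> complex"
  assumes ab: "b - a > 2"
    and cont: "continuous_on (rect a b 0 1) g"
    and hol: "g holomorphic_on open_rect a b 0 1"
    and bot: "\<forall>\<sigma>\<in>{a..b}. Im (g (Complex \<sigma> 0)) = 0"
    and top: "\<forall>\<sigma>\<in>{a..b}. Im (cnj (cis th) * g (Complex \<sigma> 1)) = 0"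
    and th: "0 < th" "th < pi"
    and ends: "\<forall>z \<in> rect a (a+2) 0 1 \<union> rect (b-2) b 0 1. norm (g z) \<le> M"
    and s: "s \<in> {a..b}" and t: "t \<in> {0..1}"
  shows "norm (g (Complex s t)) \<le> C0 * M * exp (- min th (pi - th) * min (s-a) (b-s))"
proof -
  define dl where "dl = min th (pi - th)"
  define d where "d = min (s-a) (b-s)"
  have dl: "0 < dl" "dl \<le> th" "dl \<le> pi - th" "dl \<le> pi / 2" using th by (auto simp: dl_def min_def)
  have d0: "0 \<le> d" using s by (simp add: d_def)
  have M0: "0 \<le> M"
  proof -
    have "Complex a 0 \<in> rect a (a+2) 0 1 \<union> rect (b-2) b 0 1" by (simp add: rect_def)
    then have "norm (g (Complex a 0)) \<le> M" using ends by blast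
    then show ?thesis by (meson norm_ge_zero order_trans)
  qed
  have C0p: "0 < C0" by (simp add: C0_def)
  show ?thesis
  proof (cases "s \<le> a + 2 \<or> b - 2 \<le> s")
    case True
    then have "Complex s t \<in> rect a (a+2) 0 1 \<union> rect (b-2) b 0 1" using s t by (auto simp: rect_def)
    then have gM: "norm (g (Complex s t)) \<le> M" using ends by blast
    have "d \<le> 2" using True by (auto simp: d_def)
    then have "dl * d \<le> pi / 2 * 2" using dl d0 by (intro mult_mono) auto
    then have "exp (- pi) \<le> exp (- dl * d)" by simp
    then have "1 \<le> C0 * exp (- dl * d)" using C0_ge C0p by (meson mult_left_mono less_imp_le order_trans)
    then have "M \<le> C0 * M * exp (- dl * d)" using M0
      by (metis mult.commute mult.left_commute mult_cancel_right1 mult_left_mono)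
    then show ?thesis using gM unfolding dl_def d_def by linarith
  next
    case False
    then have s2: "a + 2 < s" "s < b - 2" by auto
    define B where "B = C0 * M * exp (- dl * d)"
    have inner: "norm (g (Complex s \<tau>)) \<le> B" if tau: "0 < \<tau>" "\<tau> < 1" for \<tau>
    proof -
      have "norm (g (Complex s \<tau>)) \<le> M * (exp (- th * ((b - 1) - s)) + exp (- (pi - th) * (s - (a + 1)))) / (1 - exp (- pi))"
      proof (rule core)
        show "continuous_on (cbox (Complex (a + 1) 0) (Complex (b - 1) 1)) g"
          using cont by (rule continuous_on_subset) (auto simp: rect_def in_cbox_complex_iff)
        show "g holomorphic_on box (Complex (a + 1) 0) (Complex (b - 1) 1)"
          using hol by (rule holomorphic_on_subset) (auto simp: open_rect_def in_box_complex_iff)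
        fix \<zeta> assume z: "\<zeta> \<in> cbox (Complex (a + 1) 0) (Complex (b - 1) 1)"
        then have zr: "a + 1 \<le> Re \<zeta>" "Re \<zeta> \<le> b - 1" "0 \<le> Im \<zeta>" "Im \<zeta> \<le> 1" by (auto simp: in_cbox_complex_iff)
        { assume "Im \<zeta> = 0"
          then have "\<zeta> = Complex (Re \<zeta>) 0" by (simp add: complex_eq_iff)
          then show "Im (g \<zeta>) = 0" using bot zr by (metis atLeastAtMost_iff add_increasing2 le_diff_eq less_imp_le one_le_numeral linorder_not_le s2 order_trans zero_le_one) }
        { assume "Im \<zeta> = 1"
          then have "\<zeta> = Complex (Re \<zeta>) 1" by (simp add: complex_eq_iff)
          moreover have "Re \<zeta> \<in> {a..b}" using zr by auto
          ultimately show "Im (cnj (cis th) * g \<zeta>) = 0" using top by metis }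
        { assume "Re \<zeta> = a + 1 \<or> Re \<zeta> = b - 1"
          then have "\<zeta> \<in> rect a (a+2) 0 1 \<union> rect (b-2) b 0 1" using zr by (auto simp: rect_def)
          then show "norm (g \<zeta>) \<le> M" using ends by blast }
      qed (use s2 tau in auto)
      also have "\<dots> \<le> M * (2 * exp (2 * pi - dl * d)) / (1 - exp (- pi))"
      proof -
        have e1: "exp (- th * ((b - 1) - s)) \<le> exp (2 * pi - dl * d)"
        proof -
          have "dl * ((b - 1) - s) \<le> th * ((b - 1) - s)" using dl s2 by (intro mult_right_mono) auto
          moreover have "dl * d \<le> dl * (b - s)" using dl by (intro mult_left_mono) (auto simp: d_def)
          ultimately show ?thesis using dl pi_gt_zero by (simp add: algebra_simps)
        qed
        have e2: "exp (- (pi - th) * (s - (a + 1))) \<le> exp (2 * pi - dl * d)"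
        proof -
          have "dl * (s - (a + 1)) \<le> (pi - th) * (s - (a + 1))" using dl s2 by (intro mult_right_mono) auto
          moreover have "dl * d \<le> dl * (s - a)" using dl by (intro mult_left_mono) (auto simp: d_def)
          ultimately show ?thesis using dl pi_gt_zero by (simp add: algebra_simps)
        qed
        have "exp (- th * ((b - 1) - s)) + exp (- (pi - th) * (s - (a + 1))) \<le> 2 * exp (2 * pi - dl * d)"
          using e1 e2 by linarith
        then show ?thesis using M0 by (intro divide_right_mono mult_left_mono) auto
      qed
      also have "\<dots> = B"
      proof -
        have eq: "exp (2*pi - dl*d) = exp (2*pi) * exp (- dl * d)" by (simp flip: exp_add)
        show ?thesis unfolding B_def C0_def eq by (simp add: field_simps)
      qed
      finally show ?thesis .
    qed
    have "continuous_on (closure {0<..<1}) (\<lambda>\<tau>. norm (g (Complex s \<tau>)))"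
    proof -
      have "continuous_on {0..1} (g \<circ> (\<lambda>\<tau>. Complex s \<tau>))"
        by (rule continuous_on_compose[OF Complex_cont continuous_on_subset[OF cont]])
           (use s in \<open>auto simp: rect_def\<close>)
      then show ?thesis by (simp add: o_def continuous_on_norm)
    qed
    moreover have "t \<in> closure {0<..<1}" using t by simp
    ultimately have "norm (g (Complex s t)) \<le> B"
      by (rule continuous_le_on_closure) (use inner in auto)
    then show ?thesis by (simp add: B_def dl_def d_def)
  qed
qed


definition herm :: "complex ^ 'n \<Rightarrow> complex ^ 'n \<Rightarrow> complex" where
  "herm u v = (\<Sum>i\<in>UNIV. cnj (u $ i) * v $ i)"

definition imul :: "complex ^ 'n \<Rightarrow> complex ^ 'n" where
  "imul v = (\<chi> i. \<i> * v $ i)"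

lemma imul_nth [simp]: "imul v $ i = \<i> * v $ i"
  by (simp add: imul_def)

lemma linear_imul: "linear imul"
  by (rule linearI) (auto simp: vec_eq_iff algebra_simps)

lemma imul_add: "imul (x + y) = imul x + imul y"
  by (simp add: vec_eq_iff algebra_simps)

lemma imul_diff: "imul (x - y) = imul x - imul y"
  by (simp add: vec_eq_iff algebra_simps)

lemma imul_scaleR: "imul (r *\<^sub>R x) = r *\<^sub>R imul x"
  by (simp add: vec_eq_iff)

lemma imul_imul: "imul (imul x) = - x"
  by (simp add: vec_eq_iff)

lemma inj_imul: "inj imul"
  by (metis imul_imul injI minus_equation_iff)

lemma Re_herm: "Re (herm u v) = inner u v"
  by (simp add: herm_def inner_vec_def inner_complex_def Re_sum)

lemma Im_herm: "Im (herm u v) = std_omega u v"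
  by (simp add: herm_def std_omega_def Im_sum)

lemma omega_inner: "std_omega u v = inner (imul u) v"
  by (simp add: std_omega_def inner_vec_def inner_complex_def)

lemma inner_imul_imul: "inner (imul u) (imul v) = inner u v"
  by (simp add: inner_vec_def inner_complex_def algebra_simps)

lemma inner_imul_self: "inner (imul u) u = 0"
  by (simp add: inner_vec_def inner_complex_def algebra_simps)

lemma inner_imul_swap: "inner (imul u) v = - inner u (imul v)"
  by (simp add: inner_vec_def inner_complex_def algebra_simps sum_negf[symmetric])

lemma herm_add_left: "herm (u + w) v = herm u v + herm w v"
  by (simp add: herm_def algebra_simps sum.distrib)

lemma herm_scaleR_left: "herm (r *\<^sub>R u) v = of_real r * herm u v"
  by (simp add: herm_def sum_distrib_left algebra_simps scaleR_conv_of_real[where 'a=complex])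

lemma herm_scaleR_right: "herm u (r *\<^sub>R v) = of_real r * herm u v"
  by (simp add: herm_def sum_distrib_left algebra_simps scaleR_conv_of_real[where 'a=complex])

lemma herm_imul_left: "herm (imul u) v = - \<i> * herm u v"
  by (simp add: herm_def sum_distrib_left algebra_simps)

lemma herm_zero_left: "herm 0 v = 0"
  by (simp add: herm_def)

lemma norm_herm_le: "norm (herm u v) \<le> (\<Sum>i\<in>UNIV. norm (u $ i)) * norm v"
proof -
  have "norm (herm u v) \<le> (\<Sum>i\<in>UNIV. norm (cnj (u $ i) * v $ i))"
    unfolding herm_def by (rule norm_sum)
  also have "\<dots> \<le> (\<Sum>i\<in>UNIV. norm (u $ i) * norm v)"
    unfolding norm_mult complex_mod_cnj by (intro sum_mono mult_left_mono) (auto simp: Finite_Cartesian_Product.norm_nth_le)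
  finally show ?thesis by (simp add: sum_distrib_right)
qed

lemma continuous_herm [continuous_intros]:
  "continuous_on S f \<Longrightarrow> continuous_on S (\<lambda>x. herm u (f x))"
  unfolding herm_def by (intro continuous_intros)


lemma lag_inner: "lagrangian_subspace L \<Longrightarrow> u \<in> L \<Longrightarrow> v \<in> L \<Longrightarrow> inner (imul u) v = 0"
  unfolding lagrangian_subspace_def by (metis omega_inner)

lemma dim_zero_set: "dim {0::'a::euclidean_space} = 0"
  by (metis dim_empty dim_span span_empty)

lemma sum_decomp:
  fixes S T :: "(complex ^ 'n) set"
  assumes "subspace S" "subspace T" "dim S = CARD('n)" "dim T = CARD('n)" "S \<inter> T = {0}"
  shows "\<exists>x\<in>S. \<exists>y\<in>T. v = x + y"
proof -
  let ?ST = "{x + y |x y. x \<in> S \<and> y \<in> T}"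
  have "dim ?ST + dim (S \<inter> T) = dim S + dim T" by (rule dim_sums_Int[OF assms(1,2)])
  then have "dim ?ST = DIM(complex ^ 'n)" using assms(3-5) by (simp add: dim_zero_set)
  then have "span ?ST = UNIV" by (simp only: dim_eq_full)
  moreover have "subspace ?ST" using assms(1,2) by (rule subspace_sums)
  moreover have "span ?ST = ?ST" using \<open>subspace ?ST\<close> by (simp only: span_eq_iff)
  ultimately have "?ST = UNIV" by simp
  then show ?thesis by blast
qed

lemma lag_imul_decomp:
  fixes L :: "(complex ^ 'n) set"
  assumes lag: "lagrangian_subspace L"
  shows "\<exists>x\<in>L. \<exists>y\<in>L. v = x + imul y"
proof -
  have sL: "subspace L" and dL: "dim L = CARD('n)" using lag by (auto simp: lagrangian_subspace_def)
  have sI: "subspace (imul ` L)" using linear_imul sL by (rule linear_subspace_image)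
  have injL: "inj_on imul (span L)" using inj_imul by (rule inj_on_subset) simp
  have dI: "dim (imul ` L) = CARD('n)" using dim_image_eq[OF linear_imul injL] dL by simp
  have "L \<inter> imul ` L = {0}"
  proof (intro set_eqI iffI)
    fix x assume "x \<in> L \<inter> imul ` L"
    then obtain y where y: "y \<in> L" "x = imul y" "x \<in> L" by auto
    have "inner (imul y) x = 0" using lag_inner[OF lag y(1) y(3)] .
    then have "inner x x = 0" using y by simp
    then show "x \<in> {0}" by simp
  next
    fix x assume "x \<in> {0::complex^'n}"
    have "imul 0 = 0" by (simp add: vec_eq_iff)
    then have "0 \<in> imul ` L" using sL by (metis rev_image_eqI subspace_0)
    then show "x \<in> L \<inter> imul ` L" using \<open>x \<in> {0}\<close> sL by (simp add: subspace_0)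
  qed
  from sum_decomp[OF sL sI dL dI this] show ?thesis by blast
qed


lemma imul_zero [simp]: "imul 0 = 0"
  by (simp add: vec_eq_iff)

lemma quad_zero:
  fixes A B :: real
  assumes h: "\<And>e. e * A + e^2 * B \<le> 0"
  shows "A = 0"
proof (rule ccontr)
  assume A: "A \<noteq> 0"
  define c where "c = \<bar>B\<bar> + 1"
  have c: "0 < c" by (simp add: c_def)
  define e where "e = A / (2 * c)"
  have "e^2 * B \<ge> - (e^2 * c)"
  proof -
    have "- c \<le> B" by (simp add: c_def)
    then have "e^2 * (- c) \<le> e^2 * B" by (intro mult_left_mono) auto
    then show ?thesis by simp
  qed
  moreover have "e * A = A^2 / (2 * c)" by (simp add: e_def power2_eq_square)
  moreover have "e^2 * c = A^2 / (4 * c)" using c by (simp add: e_def power2_eq_square field_simps)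
  moreover have "A^2 / (4 * c) > 0" using A c by simp
  moreover have "A^2 / (2 * c) = 2 * (A^2 / (4 * c))" using c by (simp add: field_simps)
  ultimately have "e * A + e^2 * B > 0" by linarith
  with h[of e] show False by simp
qed

lemma eigen_span:
  fixes L L' :: "(complex ^ 'n) set"
  assumes lag: "lagrangian_subspace L" and lag': "lagrangian_subspace L'" and tr: "L \<inter> L' = {0}"
  shows "span {\<phi>\<in>L. \<exists>\<mu>::real. \<mu> *\<^sub>R \<phi> + imul \<phi> \<in> L'} = L"
proof -
  define \<Phi> where "\<Phi> = {\<phi>\<in>L. \<exists>\<mu>::real. \<mu> *\<^sub>R \<phi> + imul \<phi> \<in> L'}"
  define P where "P = {p::(complex^'n) \<times> (complex^'n). fst p \<in> L \<and> snd p \<in> L \<and> fst p + imul (snd p) \<in> L'}"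
  have sL: "subspace L" and dL: "dim L = CARD('n)" using lag by (auto simp: lagrangian_subspace_def)
  have sL': "subspace L'" and dL': "dim L' = CARD('n)" using lag' by (auto simp: lagrangian_subspace_def)
  have imul0: "imul (0::complex^'n) = 0" by simp
  have sP: "subspace P"
    unfolding subspace_def P_def
  proof (intro conjI allI impI ballI)
    show "0 \<in> {p. fst p \<in> L \<and> snd p \<in> L \<and> fst p + imul (snd p) \<in> L'}"
      using sL sL' imul0 by (simp add: subspace_0)
  next
    fix x y assume "x \<in> {p. fst p \<in> L \<and> snd p \<in> L \<and> fst p + imul (snd p) \<in> L'}"
      "y \<in> {p. fst p \<in> L \<and> snd p \<in> L \<and> fst p + imul (snd p) \<in> L'}"
    then show "x + y \<in> {p. fst p \<in> L \<and> snd p \<in> L \<and> fst p + imul (snd p) \<in> L'}"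
      using sL sL' subspace_add[OF sL' , of "fst x + imul (snd x)" "fst y + imul (snd y)"]
      by (auto simp: subspace_add imul_add algebra_simps)
  next
    fix c :: real and x assume "x \<in> {p. fst p \<in> L \<and> snd p \<in> L \<and> fst p + imul (snd p) \<in> L'}"
    then show "c *\<^sub>R x \<in> {p. fst p \<in> L \<and> snd p \<in> L \<and> fst p + imul (snd p) \<in> L'}"
      using sL sL' subspace_scale[OF sL', of "fst x + imul (snd x)" c]
      by (auto simp: subspace_scale imul_scaleR scaleR_add_right)
  qed
  have P0: "x = 0" if "(x, 0) \<in> P" for x
    using that tr imul0 by (auto simp: P_def)
  have Psurj: "\<exists>x. (x, y) \<in> P" if y: "y \<in> L" for y
  proof -
    obtain x' w where x': "x' \<in> L" and w: "w \<in> L'" and e: "imul y = x' + w"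
      using sum_decomp[OF sL sL' dL dL' tr, of "imul y"] by blast
    have "(- x', y) \<in> P" using x' w e y sL by (auto simp: P_def subspace_neg algebra_simps)
    then show ?thesis by blast
  qed
  have Psym: "inner x y' = inner x' y" if "(x, y) \<in> P" "(x', y') \<in> P" for x y x' y'
  proof -
    have m: "x \<in> L" "y \<in> L" "x' \<in> L" "y' \<in> L" "x + imul y \<in> L'" "x' + imul y' \<in> L'"
      using that by (auto simp: P_def)
    have "inner (imul (x + imul y)) (x' + imul y') = 0" using lag_inner[OF lag' m(5,6)] .
    moreover have "imul (x + imul y) = imul x - y" by (simp add: imul_add imul_imul)
    moreover have "inner (imul x) x' = 0" using lag_inner[OF lag m(1,3)] .
    moreover have "inner y (imul y') = 0" using lag_inner[OF lag m(2,4)] inner_imul_swap[of y y'] by simp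
    ultimately have "inner x y' - inner y x' = 0"
      by (simp add: inner_add_right inner_diff_left inner_imul_imul)
    then show ?thesis by (simp add: inner_commute)
  qed
  have EL: "span \<Phi> \<subseteq> L" using sL by (metis (no_types, lifting) \<Phi>_def mem_Collect_eq span_eq_iff span_mono subsetI)
  show ?thesis
  proof (rule ccontr)
    assume "span {\<phi>\<in>L. \<exists>\<mu>::real. \<mu> *\<^sub>R \<phi> + imul \<phi> \<in> L'} \<noteq> L"
    then have "span \<Phi> \<noteq> L" by (simp add: \<Phi>_def)
    then obtain v where v: "v \<in> L" "v \<notin> span \<Phi>" using EL by blast
    obtain y z where y: "y \<in> span \<Phi>" and zo: "\<And>w. w \<in> span \<Phi> \<Longrightarrow> orthogonal z w" and vyz: "v = y + z"
      by (rule orthogonal_subspace_decomp_exists[of \<Phi> v]) blast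
    have zL: "z \<in> L" using vyz v y EL sL by (metis add_diff_cancel_left' subsetD subspace_diff)
    have z0: "z \<noteq> 0" using v y vyz by auto
    define K where "K = {p\<in>P. \<forall>e\<in>span \<Phi>. inner (snd p) e = 0}"
    have sK: "subspace K"
      unfolding subspace_def K_def using sP
      by (auto simp: subspace_0 subspace_add subspace_scale inner_add_left)
    have KP: "K \<subseteq> P" by (auto simp: K_def)
    have Ksnd: "snd p \<noteq> 0" if "p \<in> K" "p \<noteq> 0" for p
      using that P0[of "fst p"] KP by (metis prod.collapse subsetD zero_prod_def)
    define Ks where "Ks = sphere 0 1 \<inter> K"
    have cKs: "compact Ks" unfolding Ks_def using sK by (intro compact_Int_closed compact_sphere closed_subspace)
    obtain xz where xz: "(xz, z) \<in> P" using Psurj zL by blast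
    have xzK: "(xz, z) \<in> K" using xz zo by (auto simp: K_def orthogonal_def inner_commute)
    have nq: "norm ((1 / norm q) *\<^sub>R q) = 1" if "q \<noteq> 0" for q :: "(complex^'n) \<times> (complex^'n)"
      using that by simp
    have pne: "(xz, z) \<noteq> 0" using z0 by (simp add: zero_prod_def)
    have "(1 / norm (xz, z)) *\<^sub>R (xz, z) \<in> Ks"
      unfolding Ks_def using nq[OF pne] subspace_scale[OF sK xzK] by simp
    then have neKs: "Ks \<noteq> {}" by blast
    define Rq where "Rq = (\<lambda>p::(complex^'n) \<times> (complex^'n). inner (fst p) (snd p) / (norm (snd p))^2)"
    have Ks_snd: "snd p \<noteq> 0" if "p \<in> Ks" for p
    proof -
      have "p \<in> K" "p \<noteq> 0" using that by (auto simp: Ks_def)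
      then show ?thesis by (rule Ksnd)
    qed
    have cRq: "continuous_on Ks Rq" unfolding Rq_def
      by (intro continuous_intros) (use Ks_snd in auto)
    obtain p0 where p0: "p0 \<in> Ks" and p0max: "\<And>p. p \<in> Ks \<Longrightarrow> Rq p \<le> Rq p0"
      using continuous_attains_sup[OF cKs neKs cRq] by blast
    define x0 where "x0 = fst p0"
    define y0 where "y0 = snd p0"
    define lam where "lam = Rq p0"
    have p0K: "p0 \<in> K" using p0 by (auto simp: Ks_def)
    have p0P: "(x0, y0) \<in> P" using p0K KP by (auto simp: x0_def y0_def)
    have y00: "y0 \<noteq> 0" using Ks_snd[OF p0] by (simp add: y0_def)
    have y0E: "inner y0 e = 0" if "e \<in> span \<Phi>" for e using p0K that by (auto simp: K_def y0_def)
    have ny0: "0 < (norm y0)^2" using y00 by simp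
    have lam0: "inner x0 y0 = lam * (norm y0)^2"
      using ny0 by (simp add: lam_def Rq_def x0_def y0_def)
    have Qineq: "inner (fst p) (snd p) \<le> lam * (norm (snd p))^2" if "p \<in> K" for p
    proof (cases "p = 0")
      case True then show ?thesis by simp
    next
      case False
      define c where "c = 1 / norm p"
      have c: "0 < c" using False by (simp add: c_def)
      have "c *\<^sub>R p \<in> Ks" unfolding Ks_def c_def using nq[OF False] subspace_scale[OF sK that] by simp
      then have "Rq (c *\<^sub>R p) \<le> lam" using p0max by (simp add: lam_def)
      moreover have "Rq (c *\<^sub>R p) = Rq p"
        using c by (simp add: Rq_def power2_eq_square field_simps)
      ultimately have "inner (fst p) (snd p) / (norm (snd p))^2 \<le> lam" by (simp add: Rq_def)
      moreover have "0 < (norm (snd p))^2" using Ksnd[OF that False] by simp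
      ultimately show ?thesis by (simp add: divide_le_eq)
    qed
    have lagr: "inner x0 (snd p) = lam * inner y0 (snd p)" if pK: "p \<in> K" for p
    proof -
      define x where "x = fst p"
      define y where "y = snd p"
      have pP: "(x, y) \<in> P" using pK KP by (auto simp: x_def y_def)
      define A where "A = inner x0 y + inner x y0 - 2 * lam * inner y0 y"
      define B where "B = inner x y - lam * (norm y)^2"
      have "e * A + e^2 * B \<le> 0" for e
      proof -
        have "p0 + e *\<^sub>R p \<in> K" using p0K pK sK by (simp add: subspace_add subspace_scale)
        from Qineq[OF this] have "inner (x0 + e *\<^sub>R x) (y0 + e *\<^sub>R y) \<le> lam * (norm (y0 + e *\<^sub>R y))^2"
          by (simp add: x0_def y0_def x_def y_def)
        moreover have "(norm (y0 + e *\<^sub>R y))^2 = (norm y0)^2 + 2 * e * inner y0 y + e^2 * (norm y)^2"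
          by (simp only: power2_norm_eq_inner) (simp add: inner_add_left inner_add_right inner_commute
               power2_eq_square algebra_simps)
        moreover have "inner (x0 + e *\<^sub>R x) (y0 + e *\<^sub>R y) = inner x0 y0 + e * (inner x0 y + inner x y0) + e^2 * inner x y"
          by (simp add: inner_add_left inner_add_right power2_eq_square algebra_simps)
        ultimately have "inner x0 y0 + e * (inner x0 y + inner x y0) + e^2 * inner x y
              \<le> lam * ((norm y0)^2 + 2 * e * inner y0 y + e^2 * (norm y)^2)"
          by simp
        then show ?thesis using lam0 by (simp add: A_def B_def algebra_simps)
      qed
      then have "A = 0" by (rule quad_zero)
      moreover have "inner x y0 = inner x0 y" using Psym[OF pP p0P] .
      ultimately show ?thesis by (simp add: A_def x_def y_def)
    qed
    define w where "w = x0 - lam *\<^sub>R y0"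
    have x0L: "x0 \<in> L" and y0L: "y0 \<in> L" using p0P by (auto simp: P_def)
    have wL: "w \<in> L" using x0L y0L sL by (simp add: w_def subspace_diff subspace_scale)
    have wPhi: "orthogonal w \<phi>" if phi: "\<phi> \<in> \<Phi>" for \<phi>
    proof -
      obtain \<mu> where \<phi>: "\<phi> \<in> L" "\<mu> *\<^sub>R \<phi> + imul \<phi> \<in> L'" using phi by (auto simp: \<Phi>_def)
      have "\<mu> *\<^sub>R \<phi> \<in> L" using \<phi> sL by (simp add: subspace_scale)
      then have "(\<mu> *\<^sub>R \<phi>, \<phi>) \<in> P" using \<phi> by (simp add: P_def)
      from Psym[OF p0P this] have "inner x0 \<phi> = \<mu> * inner \<phi> y0" by simp
      moreover have "inner y0 \<phi> = 0" using y0E phi by (simp add: span_base)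
      ultimately show ?thesis by (simp add: orthogonal_def w_def inner_diff_left inner_diff_right inner_commute)
    qed
    have wE: "inner w e = 0" if "e \<in> span \<Phi>" for e
      using orthogonal_to_span[OF that wPhi] by (simp add: orthogonal_def)
    obtain xw where xw: "(xw, w) \<in> P" using Psurj[OF wL] by blast
    have "(xw, w) \<in> K" using xw wE by (simp add: K_def)
    from lagr[OF this] have "inner x0 w = lam * inner y0 w" by simp
    then have "inner w w = 0" by (simp add: w_def inner_diff_left inner_commute)
    then have "w = 0" by simp
    then have "x0 = lam *\<^sub>R y0" by (simp add: w_def)
    then have "y0 \<in> \<Phi>" using p0P y0L by (auto simp: P_def \<Phi>_def)
    then have "inner y0 y0 = 0" using y0E by (simp add: span_base)
    then show False using y00 by simp
  qed
qed


lemma joint_inj: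
  fixes L B :: "(complex ^ 'n) set"
  assumes lag: "lagrangian_subspace L" and fin: "finite B" and spB: "L \<subseteq> span B"
  shows "\<exists>K>0. \<forall>v. norm v \<le> K * (\<Sum>\<phi>\<in>B. norm (herm \<phi> v))"
proof -
  define h where "h = (\<lambda>v. \<Sum>\<phi>\<in>B. norm (herm \<phi> v))"
  have h0: "0 \<le> h v" for v by (simp add: h_def sum_nonneg)
  have hpos: "0 < h v" if v0: "v \<noteq> 0" for v
  proof (rule ccontr)
    assume "\<not> 0 < h v"
    then have "h v = 0" using h0[of v] by simp
    then have hB: "\<forall>\<phi>\<in>B. herm \<phi> v = 0" using fin by (simp add: h_def sum_nonneg_eq_0_iff)
    have hS: "herm \<phi> v = 0" if "\<phi> \<in> span B" for \<phi>
    proof -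
      have "subspace {\<phi>. herm \<phi> v = 0}"
        by (auto simp: subspace_def herm_add_left herm_scaleR_left herm_zero_left)
      then show ?thesis using span_induct[OF that, of "\<lambda>\<phi>. herm \<phi> v = 0"] hB by auto
    qed
    obtain x y where xy: "x \<in> L" "y \<in> L" "v = x + imul y" using lag_imul_decomp[OF lag] by blast
    have "inner x v = 0" using hS[of x] xy spB Re_herm[of x v] by auto
    moreover have "inner (imul y) v = 0"
      using hS[of y] xy spB Im_herm[of y v] omega_inner[of y v] by auto
    ultimately have "inner v v = 0" using xy by (simp add: inner_add_left)
    with v0 show False by simp
  qed
  have ch: "continuous_on S h" for S unfolding h_def
    by (intro continuous_intros continuous_herm continuous_on_id)
  have ne: "sphere (0::complex^'n) 1 \<noteq> {}" by simp
  obtain v0 where v0: "v0 \<in> sphere 0 1" and vmin: "\<And>v. v \<in> sphere 0 1 \<Longrightarrow> h v0 \<le> h v"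
    using continuous_attains_inf[OF compact_sphere ne ch] by blast
  define m where "m = h v0"
  have "v0 \<noteq> 0" using v0 by auto
  then have m: "0 < m" using hpos[of v0] by (simp add: m_def)
  have hscale: "h (c *\<^sub>R v) = \<bar>c\<bar> * h v" for c v
    by (simp add: h_def herm_scaleR_right norm_mult sum_distrib_left)
  show ?thesis
  proof (intro exI[of _ "1/m"] conjI allI)
    show "0 < 1/m" using m by simp
    fix v :: "complex^'n"
    have "norm v \<le> 1 / m * h v"
    proof (cases "v = 0")
      case True then show ?thesis using h0[of v] m by simp
    next
      case False
      then have nv: "0 < norm v" by simp
      have "(1 / norm v) *\<^sub>R v \<in> sphere 0 1" using False by simp
      then have "m \<le> h ((1 / norm v) *\<^sub>R v)" using vmin m_def by blast
      also have "\<dots> = h v / norm v" using nv by (simp add: hscale)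
      finally have "m * norm v \<le> h v" using nv by (simp add: field_simps)
      then show ?thesis using m by (simp add: field_simps mult.commute)
    qed
    then show "norm v \<le> 1 / m * (\<Sum>\<phi>\<in>B. norm (herm \<phi> v))" by (simp add: h_def)
  qed
qed

lemma cnj_cis_Im:
  fixes X :: complex and mu :: real
  assumes "Im (cnj (of_real mu + \<i>) * X) = 0"
  shows "Im (cnj (cis (Arg (of_real mu + \<i>))) * X) = 0"
proof -
  define c where "c = complex_of_real mu + \<i>"
  have c: "c = of_real (norm c) * cis (Arg c)" using rcis_cmod_Arg[of c] by (simp add: rcis_def)
  have nc: "0 < norm c" by (simp add: c_def complex_eq_iff)
  have cc: "cnj c = of_real (norm c) * cnj (cis (Arg c))"
    using arg_cong[OF c, of cnj] by (simp only: complex_cnj_mult complex_cnj_complex_of_real)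
  have "cnj c * X = of_real (norm c) * (cnj (cis (Arg c)) * X)"
    by (simp only: cc mult.assoc)
  moreover have "\<And>Y. Im (complex_of_real (norm c) * Y) = norm c * Im Y" by simp
  ultimately have "Im (cnj c * X) = norm c * Im (cnj (cis (Arg c)) * X)" by metis
  then show ?thesis using assms nc by (simp add: c_def)
qed

theorem lemmaA8:
  fixes \<Lambda> \<Lambda>' :: "(complex ^ 'n) set"
  assumes "lagrangian_subspace \<Lambda>" and "lagrangian_subspace \<Lambda>'"
    and "transversal \<Lambda> \<Lambda>'"
  shows "\<exists>C \<delta>::real. \<delta> > 0 \<and>
    (\<forall>a b (f :: complex \<Rightarrow> complex ^ 'n).
       b - a > 2 \<and> holomorphic_strip a b f \<and>
       (\<forall>s\<in>{a..b}. f (Complex s 0) \<in> \<Lambda>) \<and>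
       (\<forall>s\<in>{a..b}. f (Complex s 1) \<in> \<Lambda>') \<longrightarrow>
       (\<forall>s\<in>{a..b}. \<forall>t\<in>{0..1}.
          norm (f (Complex s t)) \<le>
            C * sup_norm_on f (rect a (a + 2) 0 1 \<union> rect (b - 2) b 0 1)
              * exp (- \<delta> * min (s - a) (b - s))))"
proof -
  note lag = assms(1) and lag' = assms(2)
  have tr: "\<Lambda> \<inter> \<Lambda>' = {0}" using assms(3) by (simp add: transversal_def)
  define \<Phi> where "\<Phi> = {\<phi>\<in>\<Lambda>. \<exists>\<mu>::real. \<mu> *\<^sub>R \<phi> + imul \<phi> \<in> \<Lambda>'}"
  have spPhi: "span \<Phi> = \<Lambda>" unfolding \<Phi>_def by (rule eigen_span[OF lag lag' tr])
  obtain B where BP: "B \<subseteq> \<Phi>" and indB: "independent B" and PB: "\<Phi> \<subseteq> span B"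
    by (rule maximal_independent_subset)
  have finB: "finite B" using indB by (rule finiteI_independent)
  have LB: "\<Lambda> \<subseteq> span B" using spPhi PB by (metis span_mono span_span)
  have BL: "B \<subseteq> \<Lambda>" using BP by (auto simp: \<Phi>_def)
  define mu where "mu = (\<lambda>\<phi>. SOME \<mu>::real. \<mu> *\<^sub>R \<phi> + imul \<phi> \<in> \<Lambda>')"
  have mu: "mu \<phi> *\<^sub>R \<phi> + imul \<phi> \<in> \<Lambda>'" if "\<phi> \<in> B" for \<phi>
  proof -
    have "\<exists>\<mu>::real. \<mu> *\<^sub>R \<phi> + imul \<phi> \<in> \<Lambda>'" using that BP by (auto simp: \<Phi>_def)
    then show ?thesis unfolding mu_def by (rule someI_ex)
  qed
  define th where "th = (\<lambda>\<phi>. Arg (complex_of_real (mu \<phi>) + \<i>))"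
  have th: "0 < th \<phi>" "th \<phi> < pi" for \<phi>
    using Arg_lt_pi[of "complex_of_real (mu \<phi>) + \<i>"] by (auto simp: th_def)
  define dl where "dl = (\<lambda>\<phi>. min (th \<phi>) (pi - th \<phi>))"
  define \<delta> where "\<delta> = Min (insert 1 (dl ` B))"
  have \<delta>0: "0 < \<delta>" unfolding \<delta>_def using finB th by (auto simp: Min_gr_iff dl_def)
  have \<delta>le: "\<delta> \<le> dl \<phi>" if "\<phi> \<in> B" for \<phi> unfolding \<delta>_def using finB that by (intro Min_le) auto
  obtain K where K0: "0 < K" and Kb: "\<And>v. norm v \<le> K * (\<Sum>\<phi>\<in>B. norm (herm \<phi> v))"
    using joint_inj[OF lag finB LB] by blast
  define c where "c = (\<lambda>\<phi>::complex^'n. \<Sum>i\<in>UNIV. norm (\<phi> $ i))"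
  have c0: "0 \<le> c \<phi>" for \<phi> by (simp add: c_def sum_nonneg)
  define C where "C = K * C0 * (\<Sum>\<phi>\<in>B. c \<phi>)"
  have main: "norm (f (Complex s t)) \<le> C * sup_norm_on f (rect a (a + 2) 0 1 \<union> rect (b - 2) b 0 1)
              * exp (- \<delta> * min (s - a) (b - s))"
    if hyp: "b - a > 2 \<and> holomorphic_strip a b f \<and>
       (\<forall>s\<in>{a..b}. f (Complex s 0) \<in> \<Lambda>) \<and> (\<forall>s\<in>{a..b}. f (Complex s 1) \<in> \<Lambda>')"
      and s: "s \<in> {a..b}" and t: "t \<in> {0..1}"
    for a b :: real and f :: "complex \<Rightarrow> complex ^ 'n" and s t :: real
  proof -
    have ab: "b - a > 2" using hyp by simp
    have contf: "continuous_on (rect a b 0 1) f" and holc: "\<And>i. (\<lambda>z. f z $ i) holomorphic_on open_rect a b 0 1"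
      using hyp by (auto simp: holomorphic_strip_def)
    have fbot: "\<And>s. s \<in> {a..b} \<Longrightarrow> f (Complex s 0) \<in> \<Lambda>" and ftop: "\<And>s. s \<in> {a..b} \<Longrightarrow> f (Complex s 1) \<in> \<Lambda>'"
      using hyp by auto
    define E where "E = rect a (a + 2) 0 1 \<union> rect (b - 2) b 0 1"
    define M where "M = sup_norm_on f E"
    have ER: "E \<subseteq> rect a b 0 1" using ab by (auto simp: E_def rect_def)
    have "continuous_on E (\<lambda>z. norm (f z))"
      using contf ER by (intro continuous_intros) (rule continuous_on_subset)
    moreover have "compact E" by (simp add: E_def rect_cbox compact_Un)
    ultimately have "compact ((\<lambda>z. norm (f z)) ` E)" by (rule compact_continuous_image)
    then have bdd: "bdd_above ((\<lambda>z. norm (f z)) ` E)" by (intro bounded_imp_bdd_above compact_imp_bounded)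
    have fM: "norm (f z) \<le> M" if "z \<in> E" for z
      unfolding M_def sup_norm_on_def using bdd that by (rule cSUP_upper2) simp
    have M0: "0 \<le> M" using fM[of "Complex a 0"] by (simp add: E_def rect_def) (meson norm_ge_zero order_trans)
    define d where "d = min (s - a) (b - s)"
    have d0: "0 \<le> d" using s by (simp add: d_def)
    have each: "norm (herm \<phi> (f (Complex s t))) \<le> C0 * c \<phi> * M * exp (- \<delta> * d)" if phiB: "\<phi> \<in> B" for \<phi>
    proof -
      have phiL: "\<phi> \<in> \<Lambda>" using phiB BL by auto
      have "norm (herm \<phi> (f (Complex s t))) \<le> C0 * (c \<phi> * M) * exp (- min (th \<phi>) (pi - th \<phi>) * min (s-a) (b-s))"
      proof (rule scalar[OF ab _ _ _ _ th(1)[of \<phi>] th(2)[of \<phi>] _ s t])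
        show "continuous_on (rect a b 0 1) (\<lambda>z. herm \<phi> (f z))"
          using contf by (rule continuous_herm)
        show "(\<lambda>z. herm \<phi> (f z)) holomorphic_on open_rect a b 0 1"
          unfolding herm_def by (intro holomorphic_intros holc)
        show "\<forall>\<sigma>\<in>{a..b}. Im (herm \<phi> (f (Complex \<sigma> 0))) = 0"
        proof
          fix \<sigma> assume "\<sigma> \<in> {a..b}"
          then have "f (Complex \<sigma> 0) \<in> \<Lambda>" by (rule fbot)
          then show "Im (herm \<phi> (f (Complex \<sigma> 0))) = 0"
            using lag_inner[OF lag phiL] by (simp add: Im_herm omega_inner)
        qed
        show "\<forall>\<sigma>\<in>{a..b}. Im (cnj (cis (th \<phi>)) * herm \<phi> (f (Complex \<sigma> 1))) = 0"
        proof
          fix \<sigma> assume "\<sigma> \<in> {a..b}"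
          then have fv: "f (Complex \<sigma> 1) \<in> \<Lambda>'" by (rule ftop)
          define W where "W = mu \<phi> *\<^sub>R \<phi> + imul \<phi>"
          have "Im (herm W (f (Complex \<sigma> 1))) = 0"
            using lag_inner[OF lag' _ fv, of W] mu[OF phiB] by (simp add: W_def Im_herm omega_inner)
          moreover have "herm W v = cnj (complex_of_real (mu \<phi>) + \<i>) * herm \<phi> v" for v
            by (simp add: W_def herm_add_left herm_scaleR_left herm_imul_left algebra_simps)
          ultimately have "Im (cnj (complex_of_real (mu \<phi>) + \<i>) * herm \<phi> (f (Complex \<sigma> 1))) = 0" by simp
          then show "Im (cnj (cis (th \<phi>)) * herm \<phi> (f (Complex \<sigma> 1))) = 0"
            unfolding th_def by (rule cnj_cis_Im)
        qed
        show "\<forall>z\<in>rect a (a + 2) 0 1 \<union> rect (b - 2) b 0 1. norm (herm \<phi> (f z)) \<le> c \<phi> * M"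
        proof
          fix z assume "z \<in> rect a (a + 2) 0 1 \<union> rect (b - 2) b 0 1"
          then have "norm (f z) \<le> M" using fM by (simp add: E_def)
          then show "norm (herm \<phi> (f z)) \<le> c \<phi> * M"
            using norm_herm_le[of \<phi> "f z"] c0[of \<phi>] unfolding c_def
            by (meson mult_left_mono order_trans)
        qed
      qed
      also have "\<dots> \<le> C0 * (c \<phi> * M) * exp (- \<delta> * d)"
      proof -
        have "\<delta> * d \<le> dl \<phi> * d" using \<delta>le[OF phiB] d0 by (intro mult_right_mono) auto
        then have "exp (- min (th \<phi>) (pi - th \<phi>) * min (s-a) (b-s)) \<le> exp (- \<delta> * d)"
          by (simp add: dl_def d_def)
        moreover have "0 \<le> C0 * (c \<phi> * M)" using c0[of \<phi>] M0 by (simp add: C0_def)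
        ultimately show ?thesis by (rule mult_left_mono)
      qed
      finally show ?thesis by (simp add: mult.assoc)
    qed
    have "norm (f (Complex s t)) \<le> K * (\<Sum>\<phi>\<in>B. norm (herm \<phi> (f (Complex s t))))" by (rule Kb)
    also have "\<dots> \<le> K * (\<Sum>\<phi>\<in>B. C0 * c \<phi> * M * exp (- \<delta> * d))"
      using K0 each by (intro mult_left_mono sum_mono) auto
    also have "\<dots> = C * M * exp (- \<delta> * d)"
      by (simp add: C_def sum_distrib_left sum_distrib_right algebra_simps)
    finally show ?thesis
      by (simp add: M_def E_def d_def)
  qed
  show ?thesis
    by (rule exI[of _ C], rule exI[of _ \<delta>]) (use \<delta>0 main in blast)
qed


end
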